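(* Let $w\ge1$ be an integer and let $C=(C_{st})_{s,t\ge1}$ be the infinite matrix defined below. Then every entry $C_{st}$ is an integer, and $C$ has determinant $1$ (it is lower triangular with respect to divisibility with diagonal entries equal to $1$), so that $C^{-1}$ also has integer entries.
   Context: For $n\in\mathbb Z$, $\omega(n)$ is the number of distinct primes dividing $n$, and $I(n)=\{k\in\mathbb Z: k\mid n,\ n/k \text{ square-free}\}$. The infinite matrix $C=(C_{st})_{s,t\ge1}$ is given by: if $t\mid s$, $$C_{st}=\frac{(-1)^{sw}}{(s/t)^2}\sum_{k\in I(s/t)}(-1)^{\omega(s/(kt))}(-1)^{ktw}\binom{k(tw-1)-1}{k-1},$$ and $C_{st}=0$ if $t\nmid s$. *)

theory Defs
  imports "HOL-Computational_Algebra.Computational_Algebra"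
begin

definition omega :: "nat \<Rightarrow> nat" where
  "omega n = card (prime_factors n)"

definition Iset :: "nat \<Rightarrow> nat set" where
  "Iset n = {k. 0 < k \<and> k dvd n \<and> squarefree (n div k)}"

definition Cmat :: "nat \<Rightarrow> nat \<Rightarrow> nat \<Rightarrow> rat" where
  "Cmat w s t =
     (if t dvd s then
        (-1) ^ (s * w) / of_nat ((s div t) ^ 2) *
        (\<Sum>k\<in>Iset (s div t).
           (-1) ^ omega (s div (k * t)) * (-1) ^ (k * t * w) *
           ((of_int (int k * (int t * int w - 1) - 1) :: rat) gchoose (k - 1)))
      else 0)"

end

theory Submission
  imports Defs "HOL-Number_Theory.Cong"
begin


definition hq :: "nat \<Rightarrow> nat \<Rightarrow> rat" where
  "hq m k = (of_int (int k * (int m - 1) - 1) :: rat) gchoose (k - 1)"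

lemma gchoose_prod:
  fixes K :: rat
  shows "(K - 1) gchoose (k - 1) = (\<Prod>j\<in>{1..<k}. (K - of_nat j) / of_nat j)"
proof (cases k)
  case 0 then show ?thesis by simp
next
  case (Suc n)
  have "((K - 1) gchoose n) * fact n = (\<Prod>i = 0..<n. (K - 1) - of_nat i)"
    by (rule gbinomial_mult_fact')
  also have "\<dots> = (\<Prod>j\<in>{1..<Suc n}. K - of_nat j)"
    by (rule prod.reindex_bij_witness[where i="\<lambda>j. j - 1" and j="Suc"]) (auto simp: algebra_simps)
  finally have a: "((K - 1) gchoose n) * fact n = (\<Prod>j\<in>{1..<Suc n}. K - of_nat j)" .
  have f: "(fact n :: rat) = (\<Prod>j\<in>{1..<Suc n}. of_nat j)"
    by (simp add: fact_prod atLeastLessThanSuc_atLeastAtMost)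
  have "(\<Prod>j\<in>{1..<Suc n}. (K - of_nat j) / of_nat j) = (\<Prod>j\<in>{1..<Suc n}. K - of_nat j) / (\<Prod>j\<in>{1..<Suc n}. (of_nat j::rat))"
    by (rule prod_dividef)
  also have "\<dots> = (K - 1) gchoose n" using a f by (simp add: field_simps)
  finally show ?thesis using Suc by simp
qed

lemma hq_prod: "hq m k = (\<Prod>j\<in>{1..<k}. (of_int (int k * (int m - 1)) - of_nat j) / of_nat j)"
  unfolding hq_def using gchoose_prod[of "of_int (int k * (int m - 1))" k] by simp



lemma split_prod:
  fixes p n m :: nat
  assumes p: "prime p" and n: "n \<ge> 1"
  shows "hq m (p*n) = (\<Prod>j\<in>{j\<in>{1..<p*n}. \<not> p dvd j}. (of_int (int (p*n) * (int m - 1)) - of_nat j) / of_nat j) * hq m n"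
proof -
  let ?U = "{j\<in>{1..<p*n}. \<not> p dvd j}"
  let ?V = "(\<lambda>i. p*i) ` {1..<n}"
  let ?f = "\<lambda>j. (of_int (int (p*n) * (int m - 1)) - of_nat j) / (of_nat j :: rat)"
  have p0: "p > 0" using p prime_gt_0_nat by blast
  have seteq: "{1..<p*n} = ?U \<union> ?V"
  proof (rule set_eqI, rule iffI)
    fix j assume j: "j \<in> {1..<p*n}"
    show "j \<in> ?U \<union> ?V"
    proof (cases "p dvd j")
      case True
      then obtain i where i: "j = p*i" by blast
      with j p0 have "1 \<le> i" "i < n" by (auto simp: mult_less_cancel1)
      then show ?thesis using i by auto
    qed (use j in auto)
  next
    fix j assume "j \<in> ?U \<union> ?V"
    then show "j \<in> {1..<p*n}"
    proof
      assume "j \<in> ?V"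
      then obtain i where i0: "i \<in> {1..<n}" "j = p*i" by (rule imageE)
      then have i: "j = p*i" "1 \<le> i" "i < n" by auto
      have "p*1 \<le> p*i" using i(2) by (rule mult_le_mono2)
      moreover have "p*i < p*n" using i(3) p0 by simp
      ultimately show ?thesis using i(1) p0 by simp
    qed auto
  qed
  have disj: "?U \<inter> ?V = {}" by auto
  have inj: "inj_on (\<lambda>i. p*i) {1..<n}" using p0 by (auto simp: inj_on_def)
  have "hq m (p*n) = prod ?f {1..<p*n}" by (simp add: hq_prod)
  also have "\<dots> = prod ?f (?U \<union> ?V)" using seteq by (rule arg_cong)
  also have "\<dots> = prod ?f ?U * prod ?f ?V" by (rule prod.union_disjoint) auto
  also have "prod ?f ?V = prod (?f \<circ> (\<lambda>i. p*i)) {1..<n}" using inj by (rule prod.reindex)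
  also have "\<dots> = hq m n" unfolding hq_prod
  proof (rule prod.cong[OF refl])
    fix i assume "i \<in> {1..<n}"
    then show "(?f \<circ> (\<lambda>i. p*i)) i = (of_int (int n * (int m - 1)) - of_nat i) / of_nat i"
      using p0 by (simp add: field_simps)
  qed
  finally show ?thesis .
qed



lemma pair_cong:
  fixes F G :: "nat \<Rightarrow> int" and Q :: int and P :: nat
  shows "finite U \<Longrightarrow> (\<forall>j\<in>U. j < P \<and> P - j \<in> U \<and> 2*j \<noteq> P)
    \<Longrightarrow> (\<forall>j\<in>U. [F j * F (P-j) = G j * G (P-j)] (mod Q))
    \<Longrightarrow> [prod F U = prod G U] (mod Q)"
proof (induction "card U" arbitrary: U rule: less_induct)
  case less
  show ?case
  proof (cases "U = {}")
    case True thus ?thesis by simp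
  next
    case False
    then obtain j where j: "j \<in> U" by blast
    define j' where "j' = P - j"
    have j': "j' \<in> U" "j' \<noteq> j" "j < P" using less.prems j unfolding j'_def by auto
    define U' where "U' = U - {j, j'}"
    have fin: "finite U'" using less.prems unfolding U'_def by auto
    have cl: "\<forall>i\<in>U'. i < P \<and> P - i \<in> U' \<and> 2*i \<noteq> P"
    proof
      fix i assume i: "i \<in> U'"
      then have iU: "i \<in> U" "i \<noteq> j" "i \<noteq> j'" unfolding U'_def by auto
      then have "i < P" "P - i \<in> U" "2*i \<noteq> P" using less.prems by auto
      moreover have "P - i \<noteq> j" using iU(3) \<open>i < P\<close> j'(3) unfolding j'_def by auto
      moreover have "P - i \<noteq> j'" using iU(2) \<open>i < P\<close> j'(3) unfolding j'_def by auto
      ultimately show "i < P \<and> P - i \<in> U' \<and> 2*i \<noteq> P" unfolding U'_def by auto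
    qed
    have cg: "\<forall>i\<in>U'. [F i * F (P-i) = G i * G (P-i)] (mod Q)" using less.prems unfolding U'_def by auto
    have card: "card U' < card U" unfolding U'_def using j less.prems(1) by (intro psubset_card_mono) auto
    have IH: "[prod F U' = prod G U'] (mod Q)" using less.hyps[OF card fin cl cg] .
    have Ueq: "U = insert j (insert j' U')" unfolding U'_def using j j' by auto
    have jU': "j \<notin> insert j' U'" "j' \<notin> U'" using j' unfolding U'_def by auto
    have pF: "prod F U = F j * F j' * prod F U'" unfolding Ueq using fin jU' by (simp add: mult.assoc)
    have pG: "prod G U = G j * G j' * prod G U'" unfolding Ueq using fin jU' by (simp add: mult.assoc)
    have "[F j * F j' = G j * G j'] (mod Q)" using less.prems(3) j unfolding j'_def by auto
    then show ?thesis unfolding pF pG using IH by (rule cong_mult)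
  qed
qed

definition hi :: "nat \<Rightarrow> nat \<Rightarrow> int" where "hi m k = \<lfloor>hq m k\<rfloor>"

lemma hq_Ints: assumes "m \<ge> 1" shows "hq m k \<in> \<int>"
proof (cases "m = 1")
  case True
  have "hq m k = ((-1) gchoose (k-1))" unfolding hq_def using True by simp
  also have "\<dots> = (-1)^(k-1) * ((1 + of_nat (k-1) - 1) gchoose (k-1))"
    using gbinomial_minus[of "1::rat" "k-1"] by simp
  also have "\<dots> = (-1)^(k-1)" by (simp add: binomial_gbinomial[symmetric])
  finally show ?thesis by simp
next
  case False
  show ?thesis
  proof (cases "k = 0")
    case True then show ?thesis by (simp add: hq_def)
  next
    case False
    have kk: "1 \<le> k*(m-1)" using False \<open>m \<noteq> 1\<close> assms by (simp add: one_le_mult_iff)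
    then have "int (k*(m-1) - 1) = int (k*(m-1)) - 1" by (simp add: of_nat_diff)
    also have "int (k*(m-1)) = int k * (int m - 1)" using assms by (simp add: of_nat_diff)
    finally have "int k * (int m - 1) - 1 = int (k*(m-1) - 1)" by simp
    then have "hq m k = of_nat (k*(m-1) - 1) gchoose (k-1)" unfolding hq_def by simp
    also have "\<dots> = of_nat ((k*(m-1) - 1) choose (k-1))" by (simp add: binomial_gbinomial)
    finally show ?thesis by simp
  qed
qed

lemma hq_hi: "m \<ge> 1 \<Longrightarrow> hq m k = of_int (hi m k)"
  unfolding hi_def using hq_Ints by (metis Ints_cases floor_of_int)



definition gi :: "nat \<Rightarrow> nat \<Rightarrow> int" where "gi m k = (-1)^(k*m) * hi m k"

lemma compl_in_U:
  fixes p n j :: nat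
  assumes "j \<in> {j\<in>{1..<p*n}. \<not> p dvd j}"
  shows "p*n - j \<in> {j\<in>{1..<p*n}. \<not> p dvd j}"
proof -
  have j: "1 \<le> j" "j < p*n" "\<not> p dvd j" using assms by auto
  have "\<not> p dvd p*n - j"
  proof
    assume "p dvd p*n - j"
    moreover have "p dvd p*n" by simp
    ultimately have "p dvd p*n - (p*n - j)" by (rule dvd_diff_nat[rotated])
    also have "p*n - (p*n - j) = j" using j by simp
    finally show False using j by simp
  qed
  then show ?thesis using j by auto
qed

lemma key_cong:
  fixes p n m :: nat
  assumes p: "prime p" and n: "n \<ge> 1" and m: "m \<ge> 1"
  shows "int p ^ (2 * (multiplicity p n + 1)) dvd gi m (p*n) - gi m n"
proof -
  define r where "r = multiplicity p n"
  define Q :: int where "Q = int p ^ (2 * (r + 1))"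
  define P where "P = p * n"
  define Mi :: int where "Mi = int P * (int m - 1)"
  define U where "U = {j\<in>{1..<P}. \<not> p dvd j}"
  define E where "E = (\<Prod>j\<in>U. Mi - int j)"
  define D where "D = (\<Prod>j\<in>U. int j)"
  have p0: "p > 0" using p prime_gt_0_nat by blast
  have p1: "p > 1" using p prime_gt_1_nat by blast
  have finU: "finite U" unfolding U_def by auto
  have U0: "\<forall>j\<in>U. j > 0 \<and> j < P \<and> \<not> p dvd j" unfolding U_def by auto
  have D0: "D \<noteq> 0" unfolding D_def using finU U0 by auto
  have "hq m P = (\<Prod>j\<in>U. (of_int Mi - of_nat j) / of_nat j) * hq m n"
    using split_prod[OF p n, of m] unfolding U_def P_def Mi_def by simp
  also have "(\<Prod>j\<in>U. (of_int Mi - of_nat j) / (of_nat j :: rat)) = of_int E / of_int D"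
    unfolding E_def D_def by (simp add: prod_dividef)
  finally have "of_int (hi m P) * of_int D = of_int E * (of_int (hi m n) :: rat)"
    using D0 hq_hi[OF m] by (simp add: field_simps)
  then have rel: "hi m P * D = E * hi m n" by (metis of_int_eq_iff of_int_mult)
  have "int p ^ (r+1) dvd int P"
  proof -
    have "p ^ r dvd n" unfolding r_def by (rule multiplicity_dvd)
    then have "p ^ (r+1) dvd P" unfolding P_def by simp
    then show ?thesis by (metis of_nat_dvd_iff of_nat_power)
  qed
  then have QP: "Q dvd int P ^ 2" unfolding Q_def by (metis mult.commute power_mult dvd_power_same)
  have paircg: "\<forall>j\<in>V. [(Mi - int j) * (Mi - int (P - j)) = int j * int (P - j)] (mod Q)"
    if "\<forall>j\<in>V. j < P" for V
  proof
    fix j assume j: "j \<in> V"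
    then have jP: "j < P" using that by auto
    have "(Mi - int j) * (Mi - int (P - j)) - int j * int (P - j) = int P ^ 2 * ((int m - 1) * (int m - 2))"
      using jP unfolding Mi_def by (simp add: of_nat_diff algebra_simps power2_eq_square)
    then show "[(Mi - int j) * (Mi - int (P - j)) = int j * int (P - j)] (mod Q)"
      unfolding cong_iff_dvd_diff using QP by simp
  qed
  have copD: "coprime (int p) (\<Prod>j\<in>V. int j)" if "V \<subseteq> U" for V
    by (rule prod_coprime_right) (use that U0 p in \<open>auto intro!: prime_imp_coprime simp: coprime_int_iff\<close>)
  show ?thesis
  proof (cases "p = 2 \<and> odd n")
    case False
    have cl: "\<forall>j\<in>U. j < P \<and> P - j \<in> U \<and> 2*j \<noteq> P"
    proof
      fix j assume j: "j \<in> U"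
      have "2*j \<noteq> P"
      proof
        assume h: "2*j = P"
        then have "p dvd 2*j" unfolding P_def by simp
        then have "p dvd 2" using U0 j p by (meson prime_dvd_mult_iff)
        then have "p = 2" using p p1 using dvd_imp_le[of p 2] by auto
        then show False using False h U0 j unfolding P_def by auto
      qed
      moreover have "P - j \<in> U" using j compl_in_U unfolding U_def P_def by blast
      ultimately show "j < P \<and> P - j \<in> U \<and> 2*j \<noteq> P" using U0 j by auto
    qed
    have "[E = D] (mod Q)" unfolding E_def D_def
      by (rule pair_cong[OF finU cl]) (use paircg[of U] U0 in auto)
    then have "Q dvd (E - D) * hi m n" unfolding cong_iff_dvd_diff by simp
    also have "(E - D) * hi m n = D * (hi m P - hi m n)" using rel by (simp add: algebra_simps)
    finally have "Q dvd (hi m P - hi m n)"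
      using copD[of U] unfolding Q_def D_def by (simp add: coprime_dvd_mult_right_iff)
    moreover have "(-1::int)^(P*m) = (-1)^(n*m)"
    proof -
      have "even (P*m) = even (n*m)"
      proof (cases "p = 2")
        case True then show ?thesis using False unfolding P_def by auto
      next
        case False
        then have "odd p" using p p1 by (metis prime_odd_nat le_neq_implies_less prime_ge_2_nat)
        then show ?thesis unfolding P_def by auto
      qed
      then show ?thesis by (simp add: minus_one_power_iff)
    qed
    ultimately show ?thesis unfolding gi_def Q_def r_def P_def
      by (metis dvd_mult right_diff_distrib)
  next
    case True
    then have p2: "p = 2" and on: "odd n" by auto
    have r0: "r = 0" unfolding r_def using on p2 by (simp add: not_dvd_imp_multiplicity_0)
    have Q4: "Q = 4" unfolding Q_def r0 p2 by simp
    define U' where "U' = U - {n}"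
    have nU: "n \<in> U" unfolding U_def P_def using n p2 on by auto
    have finU': "finite U'" using finU unfolding U'_def by auto
    have cl: "\<forall>j\<in>U'. j < P \<and> P - j \<in> U' \<and> 2*j \<noteq> P"
    proof
      fix j assume j: "j \<in> U'"
      then have jn: "j \<noteq> n" "j \<in> U" unfolding U'_def by auto
      have jP: "j < P" using U0 jn(2) by blast
      have "2*j \<noteq> P" using jn unfolding P_def p2 by auto
      moreover have "P - j \<in> U" using jn compl_in_U unfolding U_def P_def by blast
      moreover have "P - j \<noteq> n" using jP jn(1) unfolding P_def p2 by linarith
      ultimately show "j < P \<and> P - j \<in> U' \<and> 2*j \<noteq> P" using jn jP unfolding U'_def by auto
    qed
    define E' where "E' = (\<Prod>j\<in>U'. Mi - int j)"
    define D' where "D' = (\<Prod>j\<in>U'. int j)"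
    have cg: "[E' = D'] (mod Q)" unfolding E'_def D'_def
      by (rule pair_cong[OF finU' cl]) (use paircg[of U'] U0 in \<open>auto simp: U'_def\<close>)
    have Ueq: "U = insert n U'" "n \<notin> U'" using nU unfolding U'_def by auto
    have EE: "E = (Mi - int n) * E'" unfolding E_def E'_def using Ueq finU' by simp
    have DD: "D = int n * D'" unfolding D_def D'_def using Ueq finU' by simp
    have Min: "Mi - int n = int n * (2 * int m - 3)" unfolding Mi_def P_def p2 by (simp add: algebra_simps)
    have rel': "hi m P * D' = (2 * int m - 3) * E' * hi m n"
    proof -
      have "int n * (hi m P * D') = int n * ((2 * int m - 3) * E' * hi m n)"
        using rel unfolding EE DD Min by (simp add: algebra_simps)
      then show ?thesis using n by simp
    qed
    have s1: "(-1::int)^(P*m) = 1" unfolding P_def p2 by simp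
    have s2: "(-1::int)^(n*m) = (-1)^m" using on by (simp add: power_mult)
    have k1: "4 dvd (2 * int m - 3) - (-1)^m"
    proof (cases "even m")
      case True then obtain a where "m = 2*a" by blast
      then show ?thesis by (simp add: algebra_simps)
    next
      case False then obtain a where "m = 2*a+1" using oddE by blast
      then show ?thesis by (simp add: algebra_simps)
    qed
    have k2: "4 dvd E' - D'" using cg unfolding cong_iff_dvd_diff Q4 .
    have "D' * (hi m P - (-1)^m * hi m n) = hi m n * ((2 * int m - 3) * (E' - D') + D' * ((2 * int m - 3) - (-1)^m))"
      using rel' by (simp add: algebra_simps)
    moreover have "4 dvd hi m n * ((2 * int m - 3) * (E' - D') + D' * ((2 * int m - 3) - (-1)^m))"
      using k1 k2 by simp
    ultimately have "4 dvd D' * (hi m P - (-1)^m * hi m n)" by simp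
    moreover have "coprime 4 D'"
    proof -
      have "coprime (int 2) D'" unfolding D'_def using copD[of U'] p2 unfolding U'_def by auto
      then have c: "coprime (2::int) D'" by simp
      have c2: "coprime ((2::int) ^ 2) D'" using c by (simp only: coprime_power_left_iff) simp
      have e: "(4::int) = 2^2" by simp
      show ?thesis unfolding e by (rule c2)
    qed
    ultimately have "4 dvd (hi m P - (-1)^m * hi m n)" by (simp add: coprime_dvd_mult_right_iff)
    then show ?thesis unfolding gi_def Q_def[symmetric] r_def[symmetric] P_def[symmetric] Q4 s1 s2 by simp
  qed
qed



definition Tsum :: "(nat \<Rightarrow> int) \<Rightarrow> nat \<Rightarrow> int" where
  "Tsum g q = (\<Sum>k\<in>Iset q. (-1) ^ omega (q div k) * g k)"

lemma finite_Iset: "q \<ge> 1 \<Longrightarrow> finite (Iset q)"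
  by (rule finite_subset[of _ "{1..q}"]) (auto simp: Iset_def dvd_imp_le)

lemma omega_mult_prime:
  assumes "prime p" "\<not> p dvd c" "c > 0"
  shows "omega (p * c) = Suc (omega c)"
proof -
  have "prime_factors (p * c) = prime_factors p \<union> prime_factors c"
    using assms by (intro prime_factors_product) auto
  also have "prime_factors p = {p}" using assms(1) by (simp add: prime_prime_factors)
  finally have "prime_factors (p*c) = insert p (prime_factors c)" by simp
  moreover have "p \<notin> prime_factors c" using assms by auto
  ultimately show ?thesis unfolding omega_def by simp
qed

lemma sum_prime_power_dvd:
  fixes g :: "nat \<Rightarrow> int" and p q :: nat
  assumes hyp: "\<And>p n. prime p \<Longrightarrow> n \<ge> 1 \<Longrightarrow> int p ^ (2 * (multiplicity p n + 1)) dvd g (p*n) - g n"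
    and p: "prime p" and q: "q \<ge> 1"
  shows "int p ^ (2 * multiplicity p q) dvd Tsum g q"
proof (cases "p dvd q")
  case False
  then show ?thesis by (simp add: not_dvd_imp_multiplicity_0)
next
  case True
  define a where "a = multiplicity p q"
  have p0: "p > 0" using p prime_gt_0_nat by blast
  have a1: "a \<ge> 1" unfolding a_def using True q p
  proof -
    have "p \<noteq> 1" using p by auto
    then have "multiplicity p q > 0" using True q by (subst multiplicity_gt_zero_iff) auto
    then show "multiplicity p q \<ge> 1" by simp
  qed
  define A where "A = {k\<in>Iset q. \<not> p dvd q div k}"
  define B where "B = {k\<in>Iset q. p dvd q div k}"
  have fin: "finite (Iset q)" using q by (rule finite_Iset)
  have finA: "finite A" "finite B" using fin unfolding A_def B_def by auto
  define f where "f = (\<lambda>k. (-1::int) ^ omega (q div k) * g k)"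
  have split: "Tsum g q = sum f A + sum f B"
  proof -
    have "Iset q = A \<union> B" "A \<inter> B = {}" unfolding A_def B_def by auto
    then show ?thesis unfolding Tsum_def f_def using finA by (simp add: sum.union_disjoint)
  qed
  have Afacts: "p dvd k \<and> k div p \<ge> 1 \<and> multiplicity p (k div p) + 1 = a
      \<and> k div p \<in> B \<and> omega (q div (k div p)) = Suc (omega (q div k))" if k: "k \<in> A" for k
  proof -
    have k0: "k > 0" "k dvd q" "squarefree (q div k)" "\<not> p dvd q div k" using k unfolding A_def Iset_def by auto
    define c where "c = q div k"
    have qkc: "q = k * c" unfolding c_def using k0 by simp
    have c0: "c > 0" using q qkc by (cases c) auto
    have "a = multiplicity p k + multiplicity p c" unfolding a_def qkc
      using p k0 c0 by (intro prime_elem_multiplicity_mult_distrib) auto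
    also have "multiplicity p c = 0" using k0 unfolding c_def by (simp add: not_dvd_imp_multiplicity_0)
    finally have ak: "multiplicity p k = a" by simp
    have pk: "p dvd k" using ak a1 p k0
        using not_dvd_imp_multiplicity_0[of p k] by (cases "p dvd k") auto
    then obtain n where kn: "k = p * n" by blast
    have n1: "n \<ge> 1" using kn k0 by (cases n) auto
    have p1: "p \<noteq> 1" using p by auto
    have mn: "multiplicity p n + 1 = a" using ak kn p0 n1 p1 multiplicity_times_same[where p=p and x=n] by simp
    have kdp: "k div p = n" using kn p0 by simp
    have qn: "q div n = p * c" using qkc kn n1 by simp
    have cop: "coprime p c" using p k0 unfolding c_def by (intro prime_imp_coprime)
    have sqc: "squarefree c" using k0 unfolding c_def by simp
    have sq: "squarefree (p * c)" using cop p sqc by (intro squarefree_mult_coprime) (auto intro: squarefree_prime)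
    have nB: "n \<in> B" unfolding B_def Iset_def using n1 sq qn qkc kn by auto
    have om: "omega (q div n) = Suc (omega c)" unfolding qn using p k0 c0 unfolding c_def
      by (intro omega_mult_prime) auto
    show ?thesis using pk kdp n1 mn nB om unfolding c_def by simp
  qed
  have Bsum0: "sum f B = (\<Sum>k\<in>A. f (k div p))"
  proof (rule sum.reindex_bij_witness[where i="\<lambda>k. k div p" and j="\<lambda>k. p * k"])
    fix k assume k: "k \<in> A"
    show "p * (k div p) = k" using Afacts[OF k] by auto
    show "k div p \<in> B" using Afacts[OF k] by auto
  next
    fix k assume k: "k \<in> B"
    show "p * k div p = k" using p0 by simp
    then show "f (p * k div p) = f k" by simp
    have k0: "k > 0" "k dvd q" "squarefree (q div k)" "p dvd q div k" using k unfolding B_def Iset_def by auto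
    obtain c where c: "q div k = p * c" using k0 by blast
    have qk: "q = k * (p * c)" using c k0 by (metis dvd_mult_div_cancel)
    have sqc: "squarefree (p * c)" using k0 c by simp
    have pc: "\<not> p dvd c"
    proof
      assume "p dvd c"
      then have "p * p dvd p * c" by simp
      then show False using sqc p unfolding squarefree_def by (metis not_prime_unit power2_eq_square)
    qed
    have "q div (p * k) = c" using qk p0 k0 by simp
    moreover have "squarefree c" using sqc by (rule squarefree_multD)
    moreover have "p * k dvd q" using qk by simp
    ultimately show "p * k \<in> A" unfolding A_def Iset_def using pc p0 k0 by auto
  qed
  have Bsum: "sum f B = (\<Sum>k\<in>A. - ((-1) ^ omega (q div k) * g (k div p)))"
    unfolding Bsum0 by (rule sum.cong[OF refl]) (simp add: f_def Afacts)
  have "Tsum g q = (\<Sum>k\<in>A. (-1) ^ omega (q div k) * (g k - g (k div p)))"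
  proof -
    have "Tsum g q = sum f A + (\<Sum>k\<in>A. - ((-1) ^ omega (q div k) * g (k div p)))" using split Bsum by simp
    also have "\<dots> = (\<Sum>k\<in>A. (-1) ^ omega (q div k) * (g k - g (k div p)))"
      unfolding f_def by (simp add: sum_subtractf sum_negf right_diff_distrib)
    finally show ?thesis .
  qed
  also have "int p ^ (2 * a) dvd \<dots>"
  proof (rule dvd_sum)
    fix k assume k: "k \<in> A"
    have e: "k = p * (k div p)" using Afacts[OF k] by simp
    have "int p ^ (2 * (multiplicity p (k div p) + 1)) dvd g (p * (k div p)) - g (k div p)"
      using hyp[OF p] Afacts[OF k] by blast
    then have "int p ^ (2 * a) dvd g k - g (k div p)" using Afacts[OF k] e by metis
    then show "int p ^ (2 * a) dvd (-1) ^ omega (q div k) * (g k - g (k div p))" by simp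
  qed
  finally show ?thesis unfolding a_def .
qed

lemma sum_sq_dvd:
  fixes g :: "nat \<Rightarrow> int" and q :: nat
  assumes hyp: "\<And>p n. prime p \<Longrightarrow> n \<ge> 1 \<Longrightarrow> int p ^ (2 * (multiplicity p n + 1)) dvd g (p*n) - g n"
    and q: "q \<ge> 1"
  shows "int q ^ 2 dvd Tsum g q"
proof (cases "Tsum g q = 0")
  case True then show ?thesis by simp
next
  case False
  show ?thesis
  proof (rule multiplicity_le_imp_dvd)
    show "int q ^ 2 \<noteq> 0" using q by simp
  next
    fix P :: int assume P: "prime P"
    define p where "p = nat P"
    have Pp: "P = int p" unfolding p_def using P by (simp add: prime_gt_0_int order.strict_implies_order)
    have pp: "prime p" using P Pp by simp
    define k where "k = multiplicity P (int q ^ 2)"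
    have "P ^ k dvd int q ^ 2" unfolding k_def by (rule multiplicity_dvd)
    then have "int (p ^ k) dvd int (q ^ 2)" unfolding Pp by simp
    then have "p ^ k dvd q ^ 2" by (simp only: of_nat_dvd_iff)
    then have "k \<le> multiplicity p (q ^ 2)" using q pp
      by (intro multiplicity_geI) (auto simp: prime_gt_0_nat)
    also have "multiplicity p (q ^ 2) = 2 * multiplicity p q" using pp q
      by (intro prime_elem_multiplicity_power_distrib) auto
    finally have kle: "k \<le> 2 * multiplicity p q" .
    have "int p ^ (2 * multiplicity p q) dvd Tsum g q" using sum_prime_power_dvd[OF hyp pp q] .
    then have "P ^ k dvd Tsum g q" unfolding Pp using kle by (meson dvd_trans le_imp_power_dvd)
    then show "multiplicity P (int q ^ 2) \<le> multiplicity P (Tsum g q)" unfolding k_def[symmetric]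
      using False P by (intro multiplicity_geI) (auto simp: prime_elem_not_unit)
  qed
qed



function Rinv :: "(nat \<Rightarrow> nat \<Rightarrow> rat) \<Rightarrow> nat \<Rightarrow> nat \<Rightarrow> rat" where
  "Rinv A s t = (if s = t then 1 else if t dvd s then - (\<Sum>u\<in>{1..<s}. A s u * Rinv A u t) else 0)"
  by auto
termination by (relation "measure (\<lambda>(A,s,t). s)") auto

function Linv :: "(nat \<Rightarrow> nat \<Rightarrow> rat) \<Rightarrow> nat \<Rightarrow> nat \<Rightarrow> rat" where
  "Linv A s t = (if t = 0 \<or> s < t then 0 else if s = t then 1 else - (\<Sum>u\<in>{t<..s}. Linv A s u * A u t))"
  by auto
termination by (relation "measure (\<lambda>(A,s,t). s - t)") auto

declare Rinv.simps[simp del] Linv.simps[simp del]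

locale utri =
  fixes A :: "nat \<Rightarrow> nat \<Rightarrow> rat"
  assumes Aint: "\<And>s t. s \<ge> 1 \<Longrightarrow> t \<ge> 1 \<Longrightarrow> A s t \<in> \<int>"
    and Azero: "\<And>s t. s \<ge> 1 \<Longrightarrow> t \<ge> 1 \<Longrightarrow> \<not> t dvd s \<Longrightarrow> A s t = 0"
    and Adiag: "\<And>t. t \<ge> 1 \<Longrightarrow> A t t = 1"
begin

lemma nd_lt: "1 \<le> (u::nat) \<Longrightarrow> u < t \<Longrightarrow> \<not> t dvd u"
  using dvd_imp_le[of t u] by auto

lemma Azero': "s \<ge> 1 \<Longrightarrow> t > s \<Longrightarrow> A s t = 0"
  using Azero[of s t] nd_lt[of s t] by auto

lemma R_zero: "\<not> t dvd s \<Longrightarrow> Rinv A s t = 0"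
  by (subst Rinv.simps) auto

lemma R_int: "Rinv A s t \<in> \<int>"
proof (induction s rule: less_induct)
  case (less s)
  have "(\<Sum>u\<in>{1..<s}. A s u * Rinv A u t) \<in> \<int>"
    by (rule Ints_sum) (use less Aint in auto)
  then show ?case by (subst Rinv.simps) auto
qed

lemma R_right:
  assumes "s \<ge> 1" "t \<ge> 1"
  shows "(\<Sum>u=1..s. A s u * Rinv A u t) = (if s = t then 1 else 0)"
proof -
  have split: "{1..s} = insert s {1..<s}" using assms by auto
  have "(\<Sum>u=1..s. A s u * Rinv A u t) = Rinv A s t + (\<Sum>u\<in>{1..<s}. A s u * Rinv A u t)"
    unfolding split using Adiag[OF assms(1)] by simp
  also have "\<dots> = (if s = t then 1 else 0)"
  proof (cases "s = t")
    case True
    have "(\<Sum>u\<in>{1..<s}. A s u * Rinv A u t) = 0"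
      by (rule sum.neutral) (use True nd_lt in \<open>auto simp: R_zero\<close>)
    then show ?thesis using True by (simp add: Rinv.simps)
  next
    case False
    show ?thesis
    proof (cases "t dvd s")
      case True then show ?thesis using False by (subst Rinv.simps) simp
    next
      case nd: False
      have "(\<Sum>u\<in>{1..<s}. A s u * Rinv A u t) = 0"
      proof (rule sum.neutral, rule ballI)
        fix u assume u: "u \<in> {1..<s}"
        show "A s u * Rinv A u t = 0"
        proof (cases "u dvd s")
          case True
          then have "\<not> t dvd u" using nd dvd_trans by blast
          then show ?thesis by (simp add: R_zero)
        qed (use u assms Azero in auto)
      qed
      then show ?thesis using False nd by (simp add: R_zero)
    qed
  qed
  finally show ?thesis .
qed

lemma L_left:
  assumes "s \<ge> 1" "t \<ge> 1"
  shows "(\<Sum>u=1..s. Linv A s u * A u t) = (if s = t then 1 else 0)"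
proof (cases "t \<le> s")
  case False
  have "(\<Sum>u=1..s. Linv A s u * A u t) = 0"
    by (rule sum.neutral) (use False Azero' in auto)
  then show ?thesis using False by simp
next
  case True
  have split: "{1..s} = {1..<t} \<union> insert t {t<..s}" using True assms by auto
  have z: "(\<Sum>u\<in>{1..<t}. Linv A s u * A u t) = 0"
    by (rule sum.neutral) (use Azero' in auto)
  have "(\<Sum>u=1..s. Linv A s u * A u t) = (\<Sum>u\<in>{1..<t}. Linv A s u * A u t) + (\<Sum>u\<in>insert t {t<..s}. Linv A s u * A u t)"
    unfolding split by (rule sum.union_disjoint) auto
  also have "\<dots> = Linv A s t + (\<Sum>u\<in>{t<..s}. Linv A s u * A u t)"
    using z Adiag[OF assms(2)] by simp
  also have "\<dots> = (if s = t then 1 else 0)"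
  proof (cases "s = t")
    case True then show ?thesis using assms by (simp add: Linv.simps)
  next
    case False
    then have "Linv A s t = - (\<Sum>u\<in>{t<..s}. Linv A s u * A u t)"
      using True assms by (subst Linv.simps) auto
    then show ?thesis using False by simp
  qed
  finally show ?thesis .
qed

lemma L_zero: "s < t \<Longrightarrow> Linv A s t = 0"
  by (subst Linv.simps) auto

lemma R_eq_L:
  assumes s: "s \<ge> 1" and t: "t \<ge> 1"
  shows "Rinv A s t = Linv A s t"
proof -
  have "(\<Sum>v=1..s. Linv A s v * (\<Sum>u=1..s. A v u * Rinv A u t))
        = (\<Sum>v=1..s. Linv A s v * (if v = t then 1 else 0))"
  proof (rule sum.cong[OF refl])
    fix v assume v: "v \<in> {1..s}"
    have "(\<Sum>u=1..s. A v u * Rinv A u t) = (\<Sum>u=1..v. A v u * Rinv A u t)"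
      by (rule sum.mono_neutral_right) (use v Azero' in auto)
    also have "\<dots> = (if v = t then 1 else 0)" using v t by (intro R_right) auto
    finally show "Linv A s v * (\<Sum>u=1..s. A v u * Rinv A u t) = Linv A s v * (if v = t then 1 else 0)" by simp
  qed
  also have "\<dots> = (if t \<le> s then Linv A s t else 0)"
    using t by (simp add: if_distrib[of "\<lambda>x. _ * x"] sum.delta cong: if_cong)
  also have "\<dots> = Linv A s t" using L_zero by auto
  finally have e1: "(\<Sum>v=1..s. Linv A s v * (\<Sum>u=1..s. A v u * Rinv A u t)) = Linv A s t" .
  have "(\<Sum>v=1..s. Linv A s v * (\<Sum>u=1..s. A v u * Rinv A u t))
      = (\<Sum>u=1..s. (\<Sum>v=1..s. Linv A s v * A v u) * Rinv A u t)"
  proof -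
    have "(\<Sum>v=1..s. Linv A s v * (\<Sum>u=1..s. A v u * Rinv A u t))
        = (\<Sum>v=1..s. \<Sum>u=1..s. Linv A s v * (A v u * Rinv A u t))" by (simp add: sum_distrib_left)
    also have "\<dots> = (\<Sum>u=1..s. \<Sum>v=1..s. Linv A s v * (A v u * Rinv A u t))" by (rule sum.swap)
    also have "\<dots> = (\<Sum>u=1..s. (\<Sum>v=1..s. Linv A s v * A v u) * Rinv A u t)" by (simp add: sum_distrib_right mult.assoc)
    finally show ?thesis .
  qed
  also have "\<dots> = (\<Sum>u=1..s. (if s = u then 1 else 0) * Rinv A u t)"
  proof (rule sum.cong[OF refl])
    fix u assume "u \<in> {1..s}"
    then show "(\<Sum>v=1..s. Linv A s v * A v u) * Rinv A u t = (if s = u then 1 else 0) * Rinv A u t"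
      using L_left[of s u] s by simp
  qed
  also have "\<dots> = Rinv A s t" using s by (simp add: if_distrib[of "\<lambda>x. x * _"] sum.delta cong: if_cong)
  finally show ?thesis using e1 by simp
qed

lemma R_left:
  assumes "s \<ge> 1" "t \<ge> 1"
  shows "(\<Sum>u=1..s. Rinv A s u * A u t) = (if s = t then 1 else 0)"
proof -
  have "(\<Sum>u=1..s. Rinv A s u * A u t) = (\<Sum>u=1..s. Linv A s u * A u t)"
    by (rule sum.cong[OF refl]) (use assms R_eq_L in auto)
  then show ?thesis using L_left[OF assms] by simp
qed

end



lemma Cmat_Ints:
  assumes w: "w \<ge> 1" and s: "s \<ge> 1" and t: "t \<ge> 1"
  shows "Cmat w s t \<in> \<int>"
proof (cases "t dvd s")
  case False then show ?thesis by (simp add: Cmat_def)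
next
  case True
  define q where "q = s div t"
  define m where "m = t * w"
  have m1: "m \<ge> 1" unfolding m_def using w t by simp
  have ts: "t \<le> s" using True s by (intro dvd_imp_le) auto
  have q1: "q \<ge> 1" unfolding q_def using ts t by (simp add: div_greater_zero_iff Suc_le_eq)
  have S: "(\<Sum>k\<in>Iset (s div t).
           (-1) ^ omega (s div (k * t)) * (-1) ^ (k * t * w) *
           ((of_int (int k * (int t * int w - 1) - 1) :: rat) gchoose (k - 1)))
        = of_int (Tsum (gi m) q)"
    unfolding Tsum_def of_int_sum q_def[symmetric]
  proof (rule sum.cong[OF refl])
    fix k assume k: "k \<in> Iset q"
    have e1: "s div (k * t) = q div k" unfolding q_def by (metis div_mult2_eq mult.commute)
    have e2: "k * t * w = k * m" unfolding m_def by (simp add: mult.assoc)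
    have e3: "(of_int (int k * (int t * int w - 1) - 1) :: rat) gchoose (k - 1) = of_int (hi m k)"
      using hq_hi[OF m1, of k] unfolding hq_def m_def by simp
    show "(-1) ^ omega (s div (k * t)) * (-1) ^ (k * t * w) *
           ((of_int (int k * (int t * int w - 1) - 1) :: rat) gchoose (k - 1))
        = of_int ((-1) ^ omega (q div k) * gi m k)"
      unfolding e1 e2 e3 gi_def by simp
  qed
  have "int q ^ 2 dvd Tsum (gi m) q"
    by (rule sum_sq_dvd[OF _ q1]) (rule key_cong[OF _ _ m1])
  then obtain z where z: "Tsum (gi m) q = int q ^ 2 * z" by blast
  have "Cmat w s t = (-1) ^ (s * w) / of_nat (q ^ 2) * of_int (int q ^ 2 * z)"
    unfolding Cmat_def using True S z q_def by simp
  also have "\<dots> = (-1) ^ (s * w) * of_int z" using q1 by simp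
  finally show ?thesis by simp
qed

lemma Cmat_diag:
  assumes "t \<ge> 1"
  shows "Cmat w t t = 1"
proof -
  have I: "Iset (Suc 0) = {1}" unfolding Iset_def by auto
  have o: "omega (Suc 0) = 0" unfolding omega_def by simp
  have sq: "(-1::rat)^(t*w) * (-1)^(t*w) = 1"
    by (simp add: power_mult_distrib[symmetric])
  show ?thesis using assms sq unfolding Cmat_def by (simp add: o I)
qed

theorem mainTheorem2:
  fixes w :: nat
  assumes "w \<ge> 1"
  shows "(\<forall>s\<ge>1. \<forall>t\<ge>1. Cmat w s t \<in> \<int>)
    \<and> (\<forall>s\<ge>1. \<forall>t\<ge>1. \<not> t dvd s \<longrightarrow> Cmat w s t = 0)
    \<and> (\<forall>t\<ge>1. Cmat w t t = 1)
    \<and> (\<exists>D :: nat \<Rightarrow> nat \<Rightarrow> rat.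
          (\<forall>s\<ge>1. \<forall>t\<ge>1. D s t \<in> \<int>)
        \<and> (\<forall>s\<ge>1. \<forall>t\<ge>1. \<not> t dvd s \<longrightarrow> D s t = 0)
        \<and> (\<forall>s\<ge>1. \<forall>t\<ge>1. (\<Sum>u=1..s. Cmat w s u * D u t) = (if s = t then 1 else 0))
        \<and> (\<forall>s\<ge>1. \<forall>t\<ge>1. (\<Sum>u=1..s. D s u * Cmat w u t) = (if s = t then 1 else 0)))"
proof -
  have A1: "\<forall>s\<ge>1. \<forall>t\<ge>1. Cmat w s t \<in> \<int>" using Cmat_Ints[OF assms] by blast
  have A2: "\<forall>s\<ge>1. \<forall>t\<ge>1. \<not> t dvd s \<longrightarrow> Cmat w s t = 0" by (simp add: Cmat_def)
  have A3: "\<forall>t\<ge>1. Cmat w t t = 1" using Cmat_diag by blast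
  interpret utri "Cmat w" by unfold_locales (use A1 A2 A3 in auto)
  have "(\<forall>s\<ge>1. \<forall>t\<ge>1. Rinv (Cmat w) s t \<in> \<int>)
        \<and> (\<forall>s\<ge>1. \<forall>t\<ge>1. \<not> t dvd s \<longrightarrow> Rinv (Cmat w) s t = 0)
        \<and> (\<forall>s\<ge>1. \<forall>t\<ge>1. (\<Sum>u=1..s. Cmat w s u * Rinv (Cmat w) u t) = (if s = t then 1 else 0))
        \<and> (\<forall>s\<ge>1. \<forall>t\<ge>1. (\<Sum>u=1..s. Rinv (Cmat w) s u * Cmat w u t) = (if s = t then 1 else 0))"
    using R_int R_zero R_right R_left by blast
  then show ?thesis using A1 A2 A3 by blast
qed


end
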